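(* Fix a source $i$ with observation window (stopping set) $W$, and let $D_{ij}=\Vert X_i-y_j\Vert^\alpha/(\theta r^\alpha)$. Consider the problem of minimizing over $\eta\in[0,1]$ the conditional network average AoI under slotted ALOHA, \[ J(\eta)=\mathbb{E}\Big[\frac{1}{\eta\,\mu_i^\Phi}\,\Big\vert\, W\Big]=\frac{\exp\Big(\frac{\theta r^\alpha}{\rho}+\lambda\int_{\mathbb{R}^2\setminus W}\frac{\eta\,\mathrm{d}x}{1-\eta+\Vert x\Vert^\alpha/(\theta r^\alpha)}\Big)}{\eta\prod_{j\neq i,\, y_j\in W}\big(1-\frac{\eta}{1+D_{ij}}\big)}. \] If \[ \sum_{y_j \in W,\, j \neq i} \frac{1}{D_{ij}} + \lambda \int_{\mathbb{R}^2 \setminus W} \Big(\frac{\theta r^\alpha}{\Vert x \Vert^\alpha} + \frac{\theta^2 r^{2\alpha}}{\Vert x \Vert^{2\alpha}} \Big)\mathrm{d}x > 1, \] then the optimal update rate of source $i$ is the solution $\eta$ of the fixed-point equation \[ \frac{1}{\eta} - \sum_{y_j \in W,\, j \neq i} \frac{1}{1 + D_{ij} - \eta} - \int_{\mathbb{R}^2 \setminus W} \frac{\lambda(1 + \Vert x \Vert^\alpha/(\theta r^\alpha))\, \mathrm{d}x}{(1 - \eta + \Vert x \Vert^\alpha/(\theta r^\alpha))^2}=0; \] otherwise the optimal update rate is $\eta=1$.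
   Context: Sources form a homogeneous Poisson point process $\{X_i\}$ of intensity $\lambda$ on $\mathbb{R}^2$, each with a destination $y_i$ at fixed distance $r$ in a uniformly random direction. Under slotted ALOHA, each source $i$ transmits in each slot independently with probability $\eta_i=\eta(W(S_{X_i}(\Phi)))\in[0,1]$, a function of its local observation $W$ (a stopping set, i.e. a random Borel set whose occurrence inside a set $\mathcal H$ is determined by the points in $\mathcal H$; in practice a disk around the source), where $S_x$ shifts coordinates to put $x$ at the origin. Transmit power $P_{\mathrm{tx}}$, noise variance $\sigma^2$, $\rho=P_{\mathrm{tx}}/\sigma^2$, unit-mean Rayleigh fading, path-loss exponent $\alpha>2$, decoding threshold $\theta$. $\mu_i^\Phi$ denotes the conditional probability (given the point process) that the SINR of link $i$ exceeds $\theta$; the expression for $J(\eta)$ is the paper's evaluation of $\mathbb{E}[1/(\eta\mu_i^\Phi)\mid W]$, with distances $\Vert x\Vert$ measured in coordinates centered at the node of link $i$. *)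

theory Defs
  imports "HOL-Analysis.Analysis"
begin

text \<open>Coordinates are centred at the source X_i of link i, so X_i = 0 and
  the plane is real^2 with Lebesgue measure lborel.\<close>

definition Dval :: "real \<Rightarrow> real \<Rightarrow> real \<Rightarrow> real^2 \<Rightarrow> real" where
  "Dval theta r alpha y = norm y powr alpha / (theta * r powr alpha)"

text \<open>The conditional average AoI J(eta) of the paper (as a closed formula).
  Jset indexes the destinations y_j (j different from i) lying in W.\<close>
definition aoi_J ::
  "real \<Rightarrow> real \<Rightarrow> real \<Rightarrow> real \<Rightarrow> real \<Rightarrow> (real^2) set \<Rightarrow> nat set \<Rightarrow> (nat \<Rightarrow> real^2) \<Rightarrow> real \<Rightarrow> real" where
  "aoi_J lam theta r alpha rho W Jset y eta =
     exp (theta * r powr alpha / rho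
          + lam * (LINT x:(- W)|lborel. eta / (1 - eta + norm x powr alpha / (theta * r powr alpha))))
     / (eta * (\<Prod>j\<in>Jset. 1 - eta / (1 + Dval theta r alpha (y j))))"

definition aoi_cond ::
  "real \<Rightarrow> real \<Rightarrow> real \<Rightarrow> real \<Rightarrow> (real^2) set \<Rightarrow> nat set \<Rightarrow> (nat \<Rightarrow> real^2) \<Rightarrow> real" where
  "aoi_cond lam theta r alpha W Jset y =
     (\<Sum>j\<in>Jset. 1 / Dval theta r alpha (y j))
     + lam * (LINT x:(- W)|lborel. theta * r powr alpha / norm x powr alpha
                                   + (theta * r powr alpha)^2 / (norm x powr alpha)^2)"

definition aoi_F ::
  "real \<Rightarrow> real \<Rightarrow> real \<Rightarrow> real \<Rightarrow> (real^2) set \<Rightarrow> nat set \<Rightarrow> (nat \<Rightarrow> real^2) \<Rightarrow> real \<Rightarrow> real" where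
  "aoi_F lam theta r alpha W Jset y eta =
     1 / eta - (\<Sum>j\<in>Jset. 1 / (1 + Dval theta r alpha (y j) - eta))
     - (LINT x:(- W)|lborel. lam * (1 + norm x powr alpha / (theta * r powr alpha))
                           / (1 - eta + norm x powr alpha / (theta * r powr alpha))^2)"

text \<open>eta is an optimal update rate: it minimises J over the admissible rates
  (0,1]; at eta = 0 the paper's J is +infinity.\<close>
definition optimal_rate :: "(real \<Rightarrow> real) \<Rightarrow> real \<Rightarrow> bool" where
  "optimal_rate J eta \<longleftrightarrow> eta \<in> {0<..1} \<and> (\<forall>eta'\<in>{0<..1}. J eta \<le> J eta')"

end

theory Submission
  imports Defs
begin


lemma pow2_bracket:
  fixes t :: real assumes "1 \<le> t"
  shows "\<exists>k::nat. 2^k \<le> t \<and> t < 2^Suc k"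
proof -
  obtain n::nat where n: "t < 2^n" using real_arch_pow[of 2 t] by auto
  have "\<forall>t::real. 1 \<le> t \<longrightarrow> t < 2^n \<longrightarrow> (\<exists>k::nat. 2^k \<le> t \<and> t < 2^Suc k)"
  proof (induction n)
    case 0 then show ?case by auto
  next
    case (Suc n)
    show ?case
    proof (intro allI impI)
      fix t :: real assume t: "1 \<le> t" "t < 2^Suc n"
      show "\<exists>k::nat. 2^k \<le> t \<and> t < 2^Suc k"
      proof (cases "t < 2^n")
        case True then show ?thesis using Suc.IH t by blast
      next
        case False then show ?thesis using t by (intro exI[of _ n]) auto
      qed
    qed
  qed
  then show ?thesis using assms n by blast
qed

lemma lborel_ball_le:
  assumes "R \<ge> 0"
  shows "emeasure lborel (ball (0::real^2) R) = ennreal (R^2) * emeasure lebesgue (ball (0::real^2) 1)"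
proof -
  have "emeasure lborel (ball (0::real^2) R) = emeasure lebesgue (ball (0::real^2) R)"
    by (simp add: emeasure_completion)
  also have "\<dots> = ennreal (R^2) * emeasure lebesgue (ball (0::real^2) 1)"
    using emeasure_lebesgue_ball_conv_unit_ball[OF assms, of "0::real^2"] by simp
  finally show ?thesis .
qed

lemma unit_ball_fin: "emeasure lebesgue (ball (0::real^2) 1) < \<infinity>"
  using emeasure_lborel_ball_finite[of "0::real^2" 1] by (simp add: emeasure_completion)



lemma norm_powr_integrable:
  fixes eps p :: real assumes eps: "eps > 0" and p: "p > 2"
  shows "integrable lborel (\<lambda>x::real^2. indicator {x. eps \<le> norm x} x * norm x powr (-p))"
proof (rule integrableI_nonneg)
  define A where "A k = {x::real^2. eps*2^k \<le> norm x \<and> norm x < eps*2^Suc k}" for k::nat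
  define c where "c k = (eps*2^k) powr (-p)" for k::nat
  define M where "M = emeasure lebesgue (ball (0::real^2) 1)"
  define q where "q = (2::real) powr (2-p)"
  have q: "0 < q" "q < 1" unfolding q_def using p by (auto intro: powr_less_one)
  have Ameas[measurable]: "A k \<in> sets lborel" for k unfolding A_def by measurable
  show "(\<lambda>x::real^2. indicator {x. eps \<le> norm x} x * norm x powr (-p)) \<in> borel_measurable lborel"
    by measurable
  show "AE x in lborel. 0 \<le> indicator {x. eps \<le> norm x} x * norm x powr (-p)" by auto
  have gen: "(g::nat\<Rightarrow>ennreal) k \<le> suminf g" for g k
  proof -
    have "sum g {k} \<le> suminf g" by (intro sum_le_suminf summableI) auto
    then show ?thesis by simp
  qed
  have pw: "ennreal (indicator {x. eps \<le> norm x} x * norm x powr (-p)) \<le> (\<Sum>k. ennreal (c k) * indicator (A k) x)"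
    for x :: "real^2"
  proof (cases "eps \<le> norm x")
    case False then show ?thesis by simp
  next
    case True
    have "1 \<le> norm x / eps" using True eps by simp
    then obtain k::nat where k: "2^k \<le> norm x / eps" "norm x / eps < 2^Suc k" using pow2_bracket by blast
    have xA: "x \<in> A k" unfolding A_def using k eps by (simp add: field_simps)
    have "norm x powr (-p) \<le> c k" unfolding c_def
      using k eps p by (intro powr_mono2') (auto simp: field_simps)
    then have "ennreal (indicator {x. eps \<le> norm x} x * norm x powr (-p)) \<le> ennreal (c k) * indicator (A k) x"
      using True xA by (auto intro: ennreal_leI)
    also have "\<dots> \<le> (\<Sum>k. ennreal (c k) * indicator (A k) x)"
      by (rule gen)
    finally show ?thesis .
  qed
  have "(\<integral>\<^sup>+ x. ennreal (indicator {x. eps \<le> norm x} x * norm (x::real^2) powr (-p)) \<partial>lborel)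
        \<le> (\<integral>\<^sup>+ x. (\<Sum>k. ennreal (c k) * indicator (A k) x) \<partial>lborel)"
    by (rule nn_integral_mono) (rule pw)
  also have "\<dots> = (\<Sum>k. \<integral>\<^sup>+ x. ennreal (c k) * indicator (A k) x \<partial>lborel)"
    by (intro nn_integral_suminf) measurable
  also have "\<dots> = (\<Sum>k. ennreal (c k) * emeasure lborel (A k))"
    using Ameas by (intro suminf_cong nn_integral_cmult_indicator) simp
  also have "\<dots> \<le> (\<Sum>k. ennreal (c k) * (ennreal ((eps*2^Suc k)^2) * M))"
  proof (intro suminf_le summableI mult_left_mono)
    fix k
    have "emeasure lborel (A k) \<le> emeasure lborel (ball (0::real^2) (eps*2^Suc k))"
      by (intro emeasure_mono) (auto simp: A_def)
    also have "\<dots> = ennreal ((eps*2^Suc k)^2) * M" unfolding M_def using eps by (intro lborel_ball_le) simp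
    finally show "emeasure lborel (A k) \<le> ennreal ((eps * 2 ^ Suc k)\<^sup>2) * M" .
  qed auto
  also have "\<dots> = (\<Sum>k. ennreal (4 * eps powr (2-p) * q^k)) * M"
  proof -
    have ck: "c k * (eps*2^Suc k)^2 = 4 * eps powr (2-p) * q^k" for k
    proof -
      have a: "c k = eps powr (-p) * (2 powr (-p)) ^ k" unfolding c_def using eps
        by (simp add: powr_mult powr_realpow[symmetric] powr_powr mult.commute)
      have b1: "((2::real)^Suc k)^2 = 4 * 4^k" by (simp add: power2_eq_square power_mult_distrib[symmetric])
      have b: "(eps*2^Suc k)^2 = 4 * eps powr 2 * 4^k" using eps b1
        by (simp add: power_mult_distrib)
      have d0: "q = 2 powr (-p) * 2 powr 2" unfolding q_def by (subst powr_add[symmetric]) simp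
      have d: "q^k = (2 powr (-p))^k * 4^k" unfolding d0 by (simp add: power_mult_distrib)
      have e: "eps powr (2-p) = eps powr (-p) * eps powr 2"
        by (subst powr_add[symmetric]) simp
      show ?thesis unfolding a b d e by (simp only: mult_ac)
    qed
    have "ennreal (c k) * (ennreal ((eps*2^Suc k)^2) * M) = ennreal (4 * eps powr (2-p) * q^k) * M" for k
      unfolding ck[symmetric] mult.assoc[symmetric]
      by (subst ennreal_mult) (auto simp: c_def)
    then show ?thesis by (simp add: ennreal_suminf_multc)
  qed
  also have "\<dots> = ennreal (\<Sum>k. 4 * eps powr (2-p) * q^k) * M"
    using q by (subst suminf_ennreal2) (auto intro!: summable_mult summable_geometric)
  also have "\<dots> < \<infinity>" unfolding M_def using unit_ball_fin
    by (simp add: ennreal_mult_less_top)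
  finally show "(\<integral>\<^sup>+ x. ennreal (indicator {x. eps \<le> norm x} x * norm (x::real^2) powr (-p)) \<partial>lborel) < \<infinity>" .
qed



lemma finish:
  fixes J F :: "real \<Rightarrow> real" and C :: real
  assumes pos: "\<And>e. e \<in> {0<..1} \<Longrightarrow> J e > 0"
    and key: "\<And>e e'. e \<in> {0<..1} \<Longrightarrow> e' \<in> {0<..1} \<Longrightarrow> e \<noteq> e' \<Longrightarrow> ln (J e') > ln (J e) - F e * (e' - e)"
    and F1: "F 1 = 1 - C"
    and Flow: "\<And>e. e \<in> {0<..1} \<Longrightarrow> F e \<ge> 1 / e - C"
    and cont: "\<And>a. 0 < a \<Longrightarrow> a \<le> 1 \<Longrightarrow> continuous_on {a..1} F"
  shows "(C > 1 \<longrightarrow> {e. optimal_rate J e} = {e \<in> {0<..1}. F e = 0})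
       \<and> (\<not> C > 1 \<longrightarrow> {e. optimal_rate J e} = {1})"
proof -
  have lt: "J e < J e'" if "e \<in> {0<..1}" "e' \<in> {0<..1}" "e \<noteq> e'" "F e * (e' - e) \<le> 0" for e e'
  proof -
    have "ln (J e) < ln (J e')" using key[OF that(1-3)] that(4) by linarith
    moreover have "J e > 0" "J e' > 0" using pos that(1,2) by auto
    ultimately show ?thesis by (metis ln_less_cancel_iff)
  qed
  have opt: "optimal_rate J e \<longleftrightarrow> e \<in> {0<..1} \<and> (\<forall>e'\<in>{0<..1}. J e \<le> J e')" for e
    unfolding optimal_rate_def by blast
  show ?thesis
  proof (intro conjI impI)
    assume C: "C > 1"
    define a where "a = 1 / (C + 1)"
    have a: "0 < a" "a \<le> 1" using C unfolding a_def by (simp_all add: field_simps)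
    have ia: "1 / a = C + 1" unfolding a_def by simp
    have "a \<in> {0<..1}" using a by simp
    then have Fa: "F a \<ge> 1" using Flow[of a] ia by linarith
    have "F 1 \<le> 0" using F1 C by linarith
    then obtain e0 where e0: "a \<le> e0" "e0 \<le> 1" "F e0 = 0"
      using IVT2'[of F 1 0 a, OF _ _ a(2) cont[OF a]] Fa by auto
    have e0in: "e0 \<in> {0<..1}" using e0 a by auto
    show "{e. optimal_rate J e} = {e \<in> {0<..1}. F e = 0}"
    proof (intro set_eqI iffI)
      fix e :: real assume "e \<in> {e. optimal_rate J e}"
      then have e: "e \<in> {0<..1}" "\<forall>e'\<in>{0<..1}. J e \<le> J e'" using opt by auto
      have "e = e0"
      proof (rule ccontr)
        assume ne: "e \<noteq> e0"
        have "J e0 < J e" using lt[OF e0in e(1)] ne e0(3) by simp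
        moreover have "J e \<le> J e0" using e(2) e0in by blast
        ultimately show False by linarith
      qed
      then show "e \<in> {e \<in> {0<..1}. F e = 0}" using e e0 by auto
    next
      fix e :: real assume e: "e \<in> {e \<in> {0<..1}. F e = 0}"
      have "J e \<le> J e'" if "e' \<in> {0<..1}" for e'
      proof (cases "e = e'")
        case False
        then show ?thesis using lt[of e e'] e that by simp
      qed simp
      then show "e \<in> {e. optimal_rate J e}" using e opt by auto
    qed
  next
    assume C: "\<not> C > 1"
    have one: "(1::real) \<in> {0<..1}" by simp
    have strict: "J 1 < J e" if "e \<in> {0<..1}" "e \<noteq> 1" for e
    proof -
      have "F 1 \<ge> 0" using F1 C by linarith
      moreover have "e - 1 \<le> 0" using that by simp
      ultimately have "F 1 * (e - 1) \<le> 0" by (rule mult_nonneg_nonpos)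
      moreover have "1 \<noteq> e" using that by simp
      ultimately show ?thesis using lt[OF one that(1)] by simp
    qed
    show "{e. optimal_rate J e} = {1}"
    proof (intro set_eqI iffI)
      fix e :: real assume "e \<in> {e. optimal_rate J e}"
      then have e: "e \<in> {0<..1}" "\<forall>e'\<in>{0<..1}. J e \<le> J e'" using opt by auto
      show "e \<in> {1}"
      proof (rule ccontr)
        assume "e \<notin> {1}"
        then have "J 1 < J e" using strict[OF e(1)] by simp
        moreover have "J e \<le> J 1" using e(2) one by blast
        ultimately show False by linarith
      qed
    next
      fix e :: real assume "e \<in> {1}"
      then have e1: "e = 1" by simp
      have "J 1 \<le> J e'" if "e' \<in> {0<..1}" for e'
        using strict[OF that] by (cases "e' = 1") auto
      then show "e \<in> {e. optimal_rate J e}" using e1 one opt by auto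
    qed
  qed
qed



lemma setint_powr:
  fixes W :: "(real^2) set" and eps p :: real
  assumes W: "W \<in> sets lborel" and eps: "eps > 0" and ball: "ball 0 eps \<subseteq> W" and p: "p > 2"
  shows "set_integrable lborel (-W) (\<lambda>x. norm x powr (-p))"
  unfolding set_integrable_def
proof (rule Bochner_Integration.integrable_bound[OF norm_powr_integrable[OF eps p]])
  show "(\<lambda>x::real^2. indicat_real (- W) x *\<^sub>R norm x powr - p) \<in> borel_measurable lborel"
    using W by measurable
  show "AE x in lborel. norm (indicat_real (- W) x *\<^sub>R norm (x::real^2) powr - p)
          \<le> norm (indicat_real {x. eps \<le> norm x} x * norm x powr - p)"
  proof (intro AE_I2)
    fix x :: "real^2"
    show "norm (indicat_real (- W) x *\<^sub>R norm x powr - p) \<le> norm (indicat_real {x. eps \<le> norm x} x * norm x powr - p)"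
    proof (cases "x \<in> W")
      case False
      then have "eps \<le> norm x" using ball by (force simp: dist_norm)
      then show ?thesis using False by simp
    qed simp
  qed
qed

lemma tangent_st:
  fixes u s t :: real
  assumes "s > 0" "t > 0"
  shows "(1 + u - t) / t - ((1 + u - s) / s + (1 + u) / s^2 * (s - t)) = (1 + u) * (s - t)^2 / (s^2 * t)"
  using assms by (simp add: divide_simps power2_eq_square) (simp add: algebra_simps)

lemma tangent_pt:
  fixes u e e' :: real
  assumes "u > 0" "e \<le> 1" "e' \<le> 1"
  shows "e' / (1 - e' + u) \<ge> e / (1 - e + u) + (1 + u) / (1 - e + u)^2 * (e' - e)"
proof -
  define s where "s = 1 - e + u"
  define t where "t = 1 - e' + u"
  have s: "s > 0" and t: "t > 0" using assms by (auto simp: s_def t_def)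
  have ee: "e = 1 + u - s" "e' = 1 + u - t" "e' - e = s - t" by (auto simp: s_def t_def)
  have "(1 + u) * (s - t)^2 / (s^2 * t) \<ge> 0" using s t assms by (intro divide_nonneg_pos mult_nonneg_nonneg) auto
  then have "e' / t - (e / s + (1 + u) / s^2 * (e' - e)) \<ge> 0"
    unfolding ee using tangent_st[OF s t, of u] by simp
  then show ?thesis unfolding s_def t_def by simp
qed

lemma g_mono_pt:
  fixes u e e' :: real
  assumes "u > 0" "e \<le> e'" "e' \<le> 1"
  shows "(1 + u) / (1 - e + u)^2 \<le> (1 + u) / (1 - e' + u)^2"
  using assms by (intro divide_left_mono power_mono mult_pos_pos) auto



locale setting =
  fixes lam theta r alpha rho eps :: real and W :: "(real^2) set" and Jset :: "nat set"
    and y :: "nat \<Rightarrow> real^2"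
  assumes lam: "lam > 0" and theta: "theta > 0" and r: "r > 0" and rho: "rho > 0"
    and alpha: "alpha > 2" and W: "W \<in> sets lborel" and eps: "eps > 0"
    and ball: "ball 0 eps \<subseteq> W" and fin: "finite Jset" and yW: "\<forall>j\<in>Jset. y j \<in> W \<and> y j \<noteq> 0"
begin

definition "cc = theta * r powr alpha"
definition "domf (x::real^2) = theta * r powr alpha / norm x powr alpha + (theta * r powr alpha)^2 / (norm x powr alpha)^2"
definition "phi e (x::real^2) = e / (1 - e + norm x powr alpha / (theta * r powr alpha))"
definition "gg e (x::real^2) = (1 + norm x powr alpha / (theta * r powr alpha)) / (1 - e + norm x powr alpha / (theta * r powr alpha))^2"
definition "Phi e = (LINT x:-W|lborel. phi e x)"
definition "G e = (LINT x:-W|lborel. gg e x)"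
definition "bb j = 1 + Dval theta r alpha (y j)"

lemma cc_pos: "theta * r powr alpha > 0"
  using theta r by simp

lemma W_norm: "x \<in> -W \<Longrightarrow> norm x \<ge> eps"
  using ball by (force simp: dist_norm)

lemma U_pos: "x \<in> -W \<Longrightarrow> norm x powr alpha / (theta * r powr alpha) > 0"
  using W_norm[of x] eps cc_pos by (intro divide_pos_pos) auto

lemma dom_eq:
  assumes "x \<in> -W"
  shows "domf x = 1 / (norm x powr alpha / (theta * r powr alpha)) + 1 / (norm x powr alpha / (theta * r powr alpha))^2"
  using U_pos[OF assms] cc_pos unfolding domf_def by (simp add: power_divide)

lemma dom_int: "set_integrable lborel (-W) domf"
proof -
  let ?c = "theta * r powr alpha"
  have i1: "set_integrable lborel (-W) (\<lambda>x. norm x powr (-alpha))"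
    using setint_powr[OF W eps ball] alpha by simp
  have i2: "set_integrable lborel (-W) (\<lambda>x. norm x powr (-(2*alpha)))"
    using setint_powr[OF W eps ball] alpha by simp
  have i3: "set_integrable lborel (-W) (\<lambda>x. ?c * norm x powr (-alpha) + ?c^2 * norm x powr (-(2*alpha)))"
    using i1 i2 by (intro set_integral_add(1) set_integrable_mult_right) auto
  show ?thesis
  proof (subst set_integrable_cong[OF refl refl])
    fix x assume x: "x \<in> -W"
    have n: "norm x > 0" using W_norm[OF x] eps by linarith
    have "norm x powr (2*alpha) = (norm x powr alpha)^2"
      by (simp add: power2_eq_square powr_add[symmetric])
    then show "domf x = ?c * norm x powr (-alpha) + ?c^2 * norm x powr (-(2*alpha))"
      unfolding domf_def powr_minus_divide by simp
  qed (rule i3)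
qed

lemma phi_meas: "set_borel_measurable lborel (-W) (phi e)"
  unfolding set_borel_measurable_def phi_def using W by measurable

lemma gg_meas: "set_borel_measurable lborel (-W) (gg e)"
  unfolding set_borel_measurable_def gg_def using W by measurable

lemma phi_int:
  assumes "0 \<le> e" "e \<le> 1"
  shows "set_integrable lborel (-W) (phi e)"
proof (rule set_integrable_bound[OF dom_int phi_meas], intro AE_I2 impI)
  fix x assume x: "x \<in> -W"
  define U where "U = norm x powr alpha / (theta * r powr alpha)"
  have U: "U > 0" using U_pos[OF x] by (simp add: U_def)
  have "phi e x = e / (1 - e + U)" by (simp add: phi_def U_def)
  moreover have "e / (1 - e + U) \<le> 1 / U"
    using U assms by (intro frac_le) auto
  moreover have "0 \<le> e / (1 - e + U)" using U assms by simp
  moreover have "domf x = 1 / U + 1 / U^2" using dom_eq[OF x] by (simp add: U_def)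
  moreover have "0 \<le> 1 / U^2" by simp
  ultimately have "norm (phi e x) \<le> 1 / U + 1 / U^2"
    by (metis abs_of_nonneg add_increasing2 real_norm_def)
  also have "\<dots> = norm (domf x)" using \<open>domf x = 1 / U + 1 / U^2\<close> U by simp
  finally show "norm (phi e x) \<le> norm (domf x)" .
qed

lemma gg_le:
  assumes "x \<in> -W" "e \<le> 1"
  shows "0 \<le> gg e x" "gg e x \<le> domf x"
proof -
  define U where "U = norm x powr alpha / (theta * r powr alpha)"
  have U: "U > 0" using U_pos[OF assms(1)] by (simp add: U_def)
  have g: "gg e x = (1 + U) / (1 - e + U)^2" by (simp add: gg_def U_def)
  show "0 \<le> gg e x" unfolding g using U by simp
  have "(1 + U) / (1 - e + U)^2 \<le> (1 + U) / U^2"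
    using U assms by (intro divide_left_mono power_mono mult_pos_pos) auto
  also have "\<dots> = 1 / U + 1 / U^2" using U by (simp add: field_simps power2_eq_square)
  also have "\<dots> = domf x" using dom_eq[OF assms(1)] by (simp add: U_def)
  finally show "gg e x \<le> domf x" unfolding g .
qed

lemma gg_int:
  assumes "e \<le> 1"
  shows "set_integrable lborel (-W) (gg e)"
proof (rule set_integrable_bound[OF dom_int gg_meas], intro AE_I2 impI)
  fix x assume x: "x \<in> -W"
  show "norm (gg e x) \<le> norm (domf x)" using gg_le[OF x assms] by simp
qed

lemma Phi_tangent:
  assumes "0 \<le> e" "e \<le> 1" "0 \<le> e'" "e' \<le> 1"
  shows "Phi e + G e * (e' - e) \<le> Phi e'"
proof -
  have "Phi e + G e * (e' - e) = (LINT x:-W|lborel. phi e x + gg e x * (e' - e))"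
    unfolding Phi_def G_def
    using phi_int[OF assms(1,2)] gg_int[OF assms(2)] by (subst set_integral_add(2)) auto
  also have "\<dots> \<le> Phi e'" unfolding Phi_def
  proof (rule set_integral_mono)
    show "set_integrable lborel (- W) (\<lambda>x. phi e x + gg e x * (e' - e))"
      using phi_int[OF assms(1,2)] gg_int[OF assms(2)] by (intro set_integral_add(1)) auto
    show "set_integrable lborel (- W) (phi e')" using phi_int[OF assms(3,4)] .
    fix x assume x: "x \<in> -W"
    show "phi e x + gg e x * (e' - e) \<le> phi e' x"
      unfolding phi_def gg_def using tangent_pt[OF U_pos[OF x] assms(2,4)] by simp
  qed
  finally show ?thesis .
qed

lemma G_mono:
  assumes "e \<le> e'" "e' \<le> 1"
  shows "G e \<le> G e'"
  unfolding G_def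
proof (rule set_integral_mono)
  show "set_integrable lborel (- W) (gg e)" using gg_int assms by simp
  show "set_integrable lborel (- W) (gg e')" using gg_int assms by simp
  fix x assume x: "x \<in> -W"
  show "gg e x \<le> gg e' x" unfolding gg_def using g_mono_pt[OF U_pos[OF x] assms] .
qed

lemma G_cont:
  assumes "0 < a"
  shows "continuous_on {a..1} G"
proof (rule continuous_on_sequentiallyI)
  fix X :: "nat \<Rightarrow> real" and a0 assume X: "\<forall>n. X n \<in> {a..1}" and a0: "a0 \<in> {a..1}" and lim: "X \<longlonglongrightarrow> a0"
  have dI: "integrable lborel (\<lambda>x. indicator (-W) x *\<^sub>R domf x)"
    using dom_int unfolding set_integrable_def .
  have "(\<lambda>n. integral\<^sup>L lborel (\<lambda>x. indicator (-W) x *\<^sub>R gg (X n) x))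
          \<longlonglongrightarrow> integral\<^sup>L lborel (\<lambda>x. indicator (-W) x *\<^sub>R gg a0 x)"
  proof (rule integral_dominated_convergence[OF _ _ dI])
    show "(\<lambda>x. indicator (-W) x *\<^sub>R gg a0 x) \<in> borel_measurable lborel"
      using gg_meas unfolding set_borel_measurable_def .
    show "(\<lambda>x. indicator (-W) x *\<^sub>R gg (X n) x) \<in> borel_measurable lborel" for n
      using gg_meas unfolding set_borel_measurable_def .
    show "AE x in lborel. (\<lambda>n. indicator (-W) x *\<^sub>R gg (X n) x) \<longlonglongrightarrow> indicator (-W) x *\<^sub>R gg a0 x"
    proof (intro AE_I2)
      fix x :: "real^2"
      show "(\<lambda>n. indicator (-W) x *\<^sub>R gg (X n) x) \<longlonglongrightarrow> indicator (-W) x *\<^sub>R gg a0 x"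
      proof (cases "x \<in> -W")
        case True
        have "1 - a0 + norm x powr alpha / (theta * r powr alpha) \<noteq> 0"
          using U_pos[OF True] a0 by auto
        then show ?thesis unfolding gg_def
          by (intro tendsto_intros lim) auto
      qed simp
    qed
    show "AE x in lborel. norm (indicator (-W) x *\<^sub>R gg (X n) x) \<le> indicator (-W) x *\<^sub>R domf x" for n
    proof (intro AE_I2)
      fix x :: "real^2"
      show "norm (indicator (-W) x *\<^sub>R gg (X n) x) \<le> indicator (-W) x *\<^sub>R domf x"
      proof (cases "x \<in> -W")
        case True
        then show ?thesis using gg_le[OF True, of "X n"] X by simp
      qed simp
    qed
  qed
  then show "(\<lambda>n. G (X n)) \<longlonglongrightarrow> G a0"
    unfolding G_def set_lebesgue_integral_def .
qed

end



context setting
begin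

lemma Dval_pos: "j \<in> Jset \<Longrightarrow> Dval theta r alpha (y j) > 0"
  using yW cc_pos unfolding Dval_def by (intro divide_pos_pos) auto

lemma bb_gt: "j \<in> Jset \<Longrightarrow> bb j > 1"
  using Dval_pos unfolding bb_def by force

lemma J_eq: "aoi_J lam theta r alpha rho W Jset y e
   = exp (theta * r powr alpha / rho + lam * Phi e) / (e * (\<Prod>j\<in>Jset. 1 - e / bb j))"
  unfolding aoi_J_def Phi_def phi_def bb_def ..

lemma F_eq: "aoi_F lam theta r alpha W Jset y e = 1 / e - (\<Sum>j\<in>Jset. 1 / (bb j - e)) - lam * G e"
proof -
  have "aoi_F lam theta r alpha W Jset y e = 1 / e - (\<Sum>j\<in>Jset. 1 / (bb j - e)) - (LINT x:-W|lborel. lam * gg e x)"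
    unfolding aoi_F_def gg_def bb_def by (simp only: times_divide_eq_right)
  also have "(LINT x:-W|lborel. lam * gg e x) = lam * G e"
    unfolding G_def by (rule set_integral_mult_right)
  finally show ?thesis .
qed

lemma cond_eq: "aoi_cond lam theta r alpha W Jset y = (\<Sum>j\<in>Jset. 1 / (bb j - 1)) + lam * G 1"
proof -
  have "G 1 = (LINT x:-W|lborel. domf x)"
    unfolding G_def
  proof (rule set_lebesgue_integral_cong)
    show "- W \<in> sets lborel" using W by simp
    show "\<forall>x. x \<in> - W \<longrightarrow> gg 1 x = domf x"
    proof (intro allI impI)
      fix x assume x: "x \<in> -W"
      define U where "U = norm x powr alpha / (theta * r powr alpha)"
      have U: "U > 0" using U_pos[OF x] by (simp add: U_def)
      have "gg 1 x = (1 + U) / U^2" by (simp add: gg_def U_def)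
      also have "\<dots> = 1 / U + 1 / U^2" using U by (simp add: field_simps power2_eq_square)
      also have "\<dots> = domf x" using dom_eq[OF x] by (simp add: U_def)
      finally show "gg 1 x = domf x" .
    qed
  qed
  then show ?thesis unfolding aoi_cond_def domf_def bb_def by simp
qed

lemma one_minus_pos: "j \<in> Jset \<Longrightarrow> e \<le> 1 \<Longrightarrow> 1 - e / bb j > 0"
proof -
  assume j: "j \<in> Jset" and e: "e \<le> 1"
  have b: "bb j > 1" using bb_gt[OF j] .
  have "e / bb j < 1" using b e by (subst divide_less_eq_1_pos) auto
  then show ?thesis by simp
qed

lemma J_pos: "e \<in> {0<..1} \<Longrightarrow> aoi_J lam theta r alpha rho W Jset y e > 0"
  unfolding J_eq using one_minus_pos fin
  by (intro divide_pos_pos mult_pos_pos prod_pos) auto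

lemma lnJ: 
  assumes "e \<in> {0<..1}"
  shows "ln (aoi_J lam theta r alpha rho W Jset y e)
     = theta * r powr alpha / rho + lam * Phi e - ln e - (\<Sum>j\<in>Jset. ln (1 - e / bb j))"
proof -
  have p: "\<And>j. j \<in> Jset \<Longrightarrow> 1 - e / bb j > 0" using one_minus_pos assms by auto
  have P: "(\<Prod>j\<in>Jset. 1 - e / bb j) > 0" using p by (intro prod_pos) auto
  have "ln (aoi_J lam theta r alpha rho W Jset y e)
     = ln (exp (theta * r powr alpha / rho + lam * Phi e)) - ln (e * (\<Prod>j\<in>Jset. 1 - e / bb j))"
    unfolding J_eq using assms P by (subst ln_div) auto
  also have "\<dots> = theta * r powr alpha / rho + lam * Phi e - (ln e + ln (\<Prod>j\<in>Jset. 1 - e / bb j))"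
    using assms P by (subst ln_mult) auto
  also have "ln (\<Prod>j\<in>Jset. 1 - e / bb j) = (\<Sum>j\<in>Jset. ln (1 - e / bb j))"
    by (rule ln_prod[OF fin]) (use p in fastforce)
  finally show ?thesis by simp
qed

lemma key:
  assumes e: "e \<in> {0<..1}" and e': "e' \<in> {0<..1}" and ne: "e \<noteq> e'"
  shows "ln (aoi_J lam theta r alpha rho W Jset y e') >
         ln (aoi_J lam theta r alpha rho W Jset y e) - aoi_F lam theta r alpha W Jset y e * (e' - e)"
proof -
  define S where "S = (\<Sum>j\<in>Jset. 1 / (bb j - e))"
  have T1: "lam * Phi e + lam * G e * (e' - e) \<le> lam * Phi e'"
    using Phi_tangent[of e e'] e e' lam
    by (metis distrib_left greaterThanAtMost_iff less_eq_real_def mult.assoc mult_le_cancel_left_pos)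
  have T2: "ln e' - ln e < (1 / e) * (e' - e)"
    using ln_diff_less[of e' e] e e' ne by simp
  have T3j: "ln (1 - e' / bb j) - ln (1 - e / bb j) \<le> (e - e') * (1 / (bb j - e))" if j: "j \<in> Jset" for j
  proof -
    have b: "bb j > 1" using bb_gt[OF j] .
    have q1: "1 - e' / bb j = (bb j - e') / bb j" "1 - e / bb j = (bb j - e) / bb j"
      using b by (auto simp: field_simps)
    have pe: "bb j - e > 0" "bb j - e' > 0" using b e e' by auto
    have "ln (1 - e' / bb j) - ln (1 - e / bb j) = ln (bb j - e') - ln (bb j - e)"
      unfolding q1 using pe b by (simp add: ln_div)
    also have "\<dots> \<le> ((bb j - e') - (bb j - e)) / (bb j - e)"
      using pe by (intro ln_diff_le) auto
    finally show ?thesis by simp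
  qed
  have T3: "(\<Sum>j\<in>Jset. ln (1 - e' / bb j)) - (\<Sum>j\<in>Jset. ln (1 - e / bb j)) \<le> (e - e') * S"
  proof -
    have "(\<Sum>j\<in>Jset. ln (1 - e' / bb j)) - (\<Sum>j\<in>Jset. ln (1 - e / bb j))
        = (\<Sum>j\<in>Jset. ln (1 - e' / bb j) - ln (1 - e / bb j))"
      by (simp add: sum_subtractf)
    also have "\<dots> \<le> (\<Sum>j\<in>Jset. (e - e') * (1 / (bb j - e)))"
      by (intro sum_mono T3j)
    also have "\<dots> = (e - e') * S" unfolding S_def by (simp add: sum_distrib_left)
    finally show ?thesis .
  qed
  have Feq: "aoi_F lam theta r alpha W Jset y e * (e' - e) = (1 / e) * (e' - e) - S * (e' - e) - lam * G e * (e' - e)"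
    unfolding F_eq S_def by (simp add: left_diff_distrib)
  have "(e - e') * S = - (S * (e' - e))" by (simp add: algebra_simps)
  then show ?thesis
    unfolding lnJ[OF e] lnJ[OF e'] Feq using T1 T2 T3 by linarith
qed

lemma F1: "aoi_F lam theta r alpha W Jset y 1 = 1 - aoi_cond lam theta r alpha W Jset y"
  unfolding F_eq cond_eq by simp

lemma Flow:
  assumes e: "e \<in> {0<..1}"
  shows "aoi_F lam theta r alpha W Jset y e \<ge> 1 / e - aoi_cond lam theta r alpha W Jset y"
proof -
  have "(\<Sum>j\<in>Jset. 1 / (bb j - e)) \<le> (\<Sum>j\<in>Jset. 1 / (bb j - 1))"
  proof (intro sum_mono)
    fix j assume j: "j \<in> Jset"
    show "1 / (bb j - e) \<le> 1 / (bb j - 1)"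
      using bb_gt[OF j] e by (intro divide_left_mono mult_pos_pos) auto
  qed
  moreover have "G e \<le> G 1" using e by (intro G_mono) auto
  then have "lam * G e \<le> lam * G 1" using lam by simp
  ultimately show ?thesis unfolding F_eq cond_eq by linarith
qed

lemma Fcont:
  assumes "0 < a" "a \<le> 1"
  shows "continuous_on {a..1} (aoi_F lam theta r alpha W Jset y)"
proof -
  have "continuous_on {a..1} (\<lambda>e. 1 / e - (\<Sum>j\<in>Jset. 1 / (bb j - e)) - lam * G e)"
    using assms bb_gt by (intro continuous_intros G_cont; fastforce)
  then show ?thesis unfolding F_eq[abs_def] .
qed

end


theorem theorem1:
  fixes lam theta r alpha rho eps :: real
    and W :: "(real^2) set" and Jset :: "nat set" and y :: "nat \<Rightarrow> real^2"
  assumes "lam > 0" and "theta > 0" and "r > 0" and "rho > 0" and "alpha > 2"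
    and "W \<in> sets lborel" and "eps > 0" and "ball 0 eps \<subseteq> W"
    and "finite Jset" and "\<forall>j\<in>Jset. y j \<in> W \<and> y j \<noteq> 0"
  shows "(aoi_cond lam theta r alpha W Jset y > 1 \<longrightarrow>
            {eta. optimal_rate (aoi_J lam theta r alpha rho W Jset y) eta}
            = {eta \<in> {0<..1}. aoi_F lam theta r alpha W Jset y eta = 0})
       \<and> (\<not> aoi_cond lam theta r alpha W Jset y > 1 \<longrightarrow>
            {eta. optimal_rate (aoi_J lam theta r alpha rho W Jset y) eta} = {1})"
proof -
  interpret setting lam theta r alpha rho eps W Jset y
    using assms by unfold_locales auto
  show ?thesis
    by (rule finish) (auto intro: J_pos key F1 Flow Fcont)
qed

end
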